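(* Let $\alpha=\exp\left(\frac{2\pi i}{5}\right)$, let $c,x\in\mathbb{C}$, and let $(a_1,A_1),\dots,(a_p,A_p)$ and $(b_1,B_1),\dots,(b_q,B_q)$ be parameter pairs ($a_j,b_j\in\mathbb{C}$, $A_j,B_j$ nonzero reals) such that all Gamma functions involved are well defined and all series involved converge. Then $$\sum_{k=0}^{4}{}_p\Psi_q\left[\begin{array}{c}(a_1,A_1),\dots,(a_p,A_p);\\(b_1,B_1),\dots,(b_q,B_q);\end{array} c(x\alpha^k)^2\right] =5\prod_{i=1}^{4}\Gamma\!\left(\tfrac{i}{5}\right)\,{}_p\Psi_{q+4}\left[\begin{array}{c}(a_1,5A_1),\dots,(a_p,5A_p);\\ \left(\tfrac15,1\right),\left(\tfrac25,1\right),\left(\tfrac35,1\right),\left(\tfrac45,1\right),(b_1,5B_1),\dots,(b_q,5B_q);\end{array}\left(\frac{cx^2}{5}\right)^5\right].$$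
   Context: The Fox–Wright function is defined by the series $${}_p\Psi_q\left[\begin{array}{c}(\alpha_1,A_1),\dots,(\alpha_p,A_p);\\(\beta_1,B_1),\dots,(\beta_q,B_q);\end{array}z\right]=\sum_{n=0}^{\infty}\frac{\Gamma(\alpha_1+A_1n)\cdots\Gamma(\alpha_p+A_pn)}{\Gamma(\beta_1+B_1n)\cdots\Gamma(\beta_q+B_qn)}\frac{z^n}{n!},$$ where $\alpha_i,\beta_j\in\mathbb{C}$ and $A_i,B_j$ are nonzero real numbers chosen so that the Gamma products are well defined. Values of parameters and variables for which the expressions do not make sense are excluded. *)

theory Defs
  imports "HOL-Analysis.Analysis"
begin

definition fw_term :: "(complex \<times> real) list \<Rightarrow> (complex \<times> real) list \<Rightarrow> complex \<Rightarrow> nat \<Rightarrow> complex" where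
  "fw_term as bs z n =
     (\<Prod>(a, A) \<leftarrow> as. Gamma (a + of_real A * of_nat n)) /
     (\<Prod>(b, B) \<leftarrow> bs. Gamma (b + of_real B * of_nat n)) * z ^ n / fact n"

definition FoxWright :: "(complex \<times> real) list \<Rightarrow> (complex \<times> real) list \<Rightarrow> complex \<Rightarrow> complex" where
  "FoxWright as bs z = (\<Sum>n. fw_term as bs z n)"

definition fw_welldef :: "(complex \<times> real) list \<Rightarrow> bool" where
  "fw_welldef ps \<longleftrightarrow> (\<forall>(a, A) \<in> set ps. A \<noteq> 0 \<and> (\<forall>n::nat. a + of_real A * of_nat n \<notin> \<int>\<^sub>\<le>\<^sub>0))"

end

theory Submission imports Defs begin

lemma notpole: "of_nat m + of_real r \<notin> (\<int>\<^sub>\<le>\<^sub>0 :: complex set)" if "r > 0" for r :: real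
proof
  assume "of_nat m + of_real r \<in> (\<int>\<^sub>\<le>\<^sub>0 :: complex set)"
  then obtain k :: nat where "of_nat m + of_real r = (- of_nat k :: complex)" by (elim nonpos_Ints_cases')
  then have "Re (of_nat m + of_real r) = Re (- of_nat k :: complex)" by simp
  then show False using that by simp
qed

lemma G1: "Gamma (of_nat (Suc m) + of_real r :: complex) = (of_nat m + of_real r) * Gamma (of_nat m + of_real r)"
  if "r > 0" for r :: real
  using Gamma_plus1[OF notpole[OF that, of m]] by (simp add: algebra_simps)

definition D :: "nat \<Rightarrow> complex" where
 "D m = Gamma (of_nat m + of_real (1/5)) * Gamma (of_nat m + of_real (2/5)) * Gamma (of_nat m + of_real (3/5)) * Gamma (of_nat m + of_real (4/5))"

lemma keyD: "fact m * D m = D 0 * fact (5*m) / 5^(5*m)"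
proof (induction m)
  case 0 then show ?case by simp
next
  case (Suc m)
  have p1: "(0::real) < 1/5" and p2: "(0::real) < 2/5" and p3: "(0::real) < 3/5" and p4: "(0::real) < 4/5" by simp_all
  have e: "5 * Suc m = Suc (Suc (Suc (Suc (Suc (5*m)))))" by simp
  have dS: "D (Suc m) = (of_nat m + of_real (1/5)) * (of_nat m + of_real (2/5)) * (of_nat m + of_real (3/5)) * (of_nat m + of_real (4/5)) * D m"
    unfolding D_def G1[of "1/5" m, OF p1] G1[of "2/5" m, OF p2] G1[of "3/5" m, OF p3] G1[of "4/5" m, OF p4]
    by (simp only: mult_ac)
  have "fact (Suc m) * D (Suc m) = (of_nat m + 1) * (of_nat m + of_real (1/5)) * (of_nat m + of_real (2/5)) * (of_nat m + of_real (3/5)) * (of_nat m + of_real (4/5)) * (fact m * D m)"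
    by (simp only: dS fact_Suc of_nat_Suc mult_ac add_ac)
  also have "\<dots> = (of_nat m + 1) * (of_nat m + of_real (1/5)) * (of_nat m + of_real (2/5)) * (of_nat m + of_real (3/5)) * (of_nat m + of_real (4/5)) * (D 0 * fact (5*m) / 5^(5*m))"
    using Suc by simp
  also have "\<dots> = D 0 * fact (5 * Suc m) / 5 ^ (5 * Suc m)"
    unfolding e by (simp add: fact_Suc field_simps)
  finally show ?case .
qed
lemma rootsum:
  fixes n :: nat
  defines "\<alpha> \<equiv> exp (2 * of_real pi * \<i> / 5)"
  shows "(\<Sum>k\<le>4. (\<alpha> ^ (2*k)) ^ n) = (if 5 dvd n then 5 else 0)"
proof -
  have a5: "\<alpha> ^ 5 = 1" unfolding \<alpha>_def exp_of_nat_mult[symmetric] by (simp add: mult_ac)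
  define \<beta> where "\<beta> = \<alpha> ^ (2*n)"
  have b5: "\<beta> ^ 5 = 1" unfolding \<beta>_def
    by (metis a5 power_mult power_mult_distrib mult.commute power_one)
  have eq: "(\<Sum>k\<le>4. (\<alpha> ^ (2*k)) ^ n) = (\<Sum>k<5. \<beta> ^ k)"
    unfolding \<beta>_def by (rule sum.cong) (auto simp: power_mult[symmetric] mult_ac)
  have bexp: "\<beta> = exp (2 * of_real pi * \<i> * of_nat (2*n) / of_nat 5)"
    unfolding \<beta>_def \<alpha>_def exp_of_nat_mult[symmetric] by (simp add: field_simps)
  have b1: "\<beta> = 1 \<longleftrightarrow> 5 dvd n"
    unfolding bexp by (subst complex_root_unity_eq_1) presburger+
  show ?thesis
  proof (cases "5 dvd n")
    case True
    then show ?thesis using b1 eq by simp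
  next
    case False
    then have "\<beta> \<noteq> 1" using b1 by simp
    then show ?thesis using eq False b5 by (simp add: geometric_sum)
  qed
qed
lemma prodA: "prod_list (map (\<lambda>(a, A). Gamma (a + of_real A * of_nat m)) (map (\<lambda>(a, A). (a, 5 * A)) as))
   = prod_list (map (\<lambda>(a, A). Gamma (a + of_real A * of_nat (5*m))) as)"
  by (induction as) (auto simp: algebra_simps)

lemma prodB: "prod_list (map (\<lambda>(b, B). Gamma (b + of_real B * of_nat m))
      ([(1/5, 1), (2/5, 1), (3/5, 1), (4/5, 1)] @ map (\<lambda>(b, B). (b, 5 * B)) bs))
   = D m * prod_list (map (\<lambda>(b, B). Gamma (b + of_real B * of_nat (5*m))) bs)"
  unfolding D_def by (simp only: map_append prod_list.append prodA) (simp add: add_ac mult_ac)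

theorem theorem3:
  fixes c x :: complex and as bs :: "(complex \<times> real) list"
  defines "\<alpha> \<equiv> exp (2 * of_real pi * \<i> / 5)"
  assumes "fw_welldef as" and "fw_welldef bs"
    and "\<And>k. k \<le> 4 \<Longrightarrow> summable (fw_term as bs (c * (x * \<alpha> ^ k)\<^sup>2))"
    and "summable (fw_term (map (\<lambda>(a, A). (a, 5 * A)) as)
           ([(1/5, 1), (2/5, 1), (3/5, 1), (4/5, 1)] @ map (\<lambda>(b, B). (b, 5 * B)) bs)
           ((c * x\<^sup>2 / 5) ^ 5))"
  shows "(\<Sum>k\<le>4. FoxWright as bs (c * (x * \<alpha> ^ k)\<^sup>2)) =
         5 * (\<Prod>i\<in>{1..4::nat}. Gamma (of_nat i / 5)) *
         FoxWright (map (\<lambda>(a, A). (a, 5 * A)) as)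
           ([(1/5, 1), (2/5, 1), (3/5, 1), (4/5, 1)] @ map (\<lambda>(b, B). (b, 5 * B)) bs)
           ((c * x\<^sup>2 / 5) ^ 5)"
proof -
  define P where "P n = prod_list (map (\<lambda>(a, A). Gamma (a + of_real A * of_nat n)) as)" for n
  define Q where "Q n = prod_list (map (\<lambda>(b, B). Gamma (b + of_real B * of_nat n)) bs)" for n
  define z0 where "z0 = c * x^2"
  define g where "g n = P n / Q n * z0 ^ n / fact n" for n
  define G where "G = (\<Prod>i\<in>{1..4::nat}. Gamma (of_nat i / 5 :: complex))"
  define as' where "as' = map (\<lambda>(a, A). (a, 5 * A)) as"
  define bs' where "bs' = [(1/5, 1), (2/5, 1), (3/5, 1), (4/5, 1)] @ map (\<lambda>(b, B). (b, 5 * B)) bs"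
  define w where "w = (c * x\<^sup>2 / 5) ^ 5"
  define h where "h = fw_term as' bs' w"
  define f where "f n = g n * (if 5 dvd n then 5 else 0)" for n
  have h1: "fw_term as bs (c * (x * \<alpha> ^ k)\<^sup>2) n = g n * (\<alpha> ^ (2*k)) ^ n" for k n
    unfolding fw_term_def g_def P_def Q_def z0_def
    by (simp add: power_mult_distrib power_mult[symmetric] mult_ac)
  have h1': "fw_term as bs (c * (x * \<alpha> ^ k)\<^sup>2) = (\<lambda>n. g n * (\<alpha> ^ (2*k)) ^ n)" for k
    by (rule ext) (rule h1)
  have sk: "summable (\<lambda>n. g n * (\<alpha> ^ (2*k)) ^ n)" if "k \<in> {..4}" for k
    using assms(4)[of k] that unfolding h1' by simp
  have L: "(\<Sum>k\<le>4. FoxWright as bs (c * (x * \<alpha> ^ k)\<^sup>2)) = (\<Sum>n. \<Sum>k\<le>4. g n * (\<alpha> ^ (2*k)) ^ n)"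
    unfolding FoxWright_def h1' by (rule suminf_sum[symmetric]) (rule sk)
  have fe: "(\<lambda>n. \<Sum>k\<le>4. g n * (\<alpha> ^ (2*k)) ^ n) = f"
    unfolding f_def by (auto simp: sum_distrib_left[symmetric] rootsum \<alpha>_def)
  have fs: "summable f" unfolding fe[symmetric] by (rule summable_sum) (rule sk)
  have sm: "strict_mono (\<lambda>m::nat. 5 * m)" by (rule strict_monoI) simp
  have f5: "(\<lambda>m. f (5 * m)) sums (\<Sum>n. f n)"
    by (subst sums_mono_reindex[OF sm]) (auto simp: f_def summable_sums[OF fs])
  have G0: "G = D 0"
    unfolding G_def D_def by (simp add: eval_nat_numeral prod.atLeast_Suc_atMost add_ac mult_ac)
  have Gnz: "G \<noteq> 0"
    unfolding G0 D_def using notpole[of "1/5" 0] notpole[of "2/5" 0] notpole[of "3/5" 0] notpole[of "4/5" 0]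
    by (simp add: Gamma_eq_zero_iff)
  have pt: "f (5 * m) = 5 * G * h m" for m
  proof -
    have k: "fact m * D m = G * fact (5*m) / 5^(5*m)" using keyD[of m] G0 by simp
    have Dnz: "D m \<noteq> 0" using k Gnz by auto
    have wm: "w ^ m = z0 ^ (5*m) / 5 ^ (5*m)"
      unfolding w_def z0_def by (simp add: power_divide power_mult)
    have "h m = P (5*m) / (D m * Q (5*m)) * w ^ m / fact m"
      unfolding h_def fw_term_def as'_def bs'_def prodB prodA P_def Q_def by simp
    also have "\<dots> = P (5*m) / Q (5*m) * z0 ^ (5*m) / (5 ^ (5*m) * (fact m * D m))"
      unfolding wm by (simp add: field_simps)
    also have "\<dots> = P (5*m) / Q (5*m) * z0 ^ (5*m) / (G * fact (5*m))"
      unfolding k by (simp add: field_simps)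
    finally show ?thesis unfolding f_def g_def using Gnz by (simp add: field_simps)
  qed
  have "5 * G * FoxWright as' bs' w = (\<Sum>m. 5 * G * h m)"
    unfolding FoxWright_def h_def using assms(5) unfolding as'_def bs'_def w_def
    by (rule suminf_mult[symmetric])
  also have "\<dots> = (\<Sum>n. f n)" using f5 pt by (simp add: sums_iff)
  finally show ?thesis unfolding L fe G_def as'_def bs'_def w_def by simp
qed
end
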